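(* Let $n,p,r\ge 1$, let $A_0,A_1\in\mathbb{R}^{n\times n}$, $B\in\mathbb{R}^{n\times r}$, $C\in\mathbb{R}^{p\times n}$, and consider the second order continuous-time linear system $$x''(t)=A_0x(t)+A_1x'(t)+Bu(t),\qquad x(0)=x_0,\ x'(0)=x_1,\qquad y(t)=Cx(t),$$ with state $x(t)\in\mathbb{R}^n$, input $u(t)\in\mathbb{R}^r$, output $y(t)\in\mathbb{R}^p$ and unknown initial vectors $x_0,x_1\in\mathbb{R}^n$, where $x(\cdot)$ is continuously differentiable of order $2n-1$ and $u(\cdot)$ is continuously differentiable of order $2n-3$. Define matrices $S_k,P_k\in\mathbb{R}^{n\times n}$ by $S_0=A_0$, $P_0=A_1$ and, for $k\ge1$, $S_k=P_{k-1}A_0$, $P_k=S_{k-1}+P_{k-1}A_1$. Let $\mathcal{O}(A_0,A_1,C)$ be the $(2np)\times(2n)$ block matrix whose block rows are, in order, $$\begin{bmatrix} C & 0_{p\times n}\end{bmatrix},\ \begin{bmatrix} 0_{p\times n} & C\end{bmatrix},\ \begin{bmatrix} CS_0 & CP_0\end{bmatrix},\ \dots,\ \begin{bmatrix} CS_{2n-3} & CP_{2n-3}\end{bmatrix}.$$ Then the system is observable if and only if $\mathcal{O}(A_0,A_1,C)$ has full rank, i.e. $\operatorname{rank}\mathcal{O}(A_0,A_1,C)=2n$.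
   Context: The system is called observable (on an interval $[0,t_1]$, $t_1>0$) if any initial state $(x_0,x_1)$ at $t=0$ can be uniquely determined from the knowledge of the output $y(t)$ and the input $u(t)$ over $[0,t_1]$. Here $0_{p\times n}$ denotes the $p\times n$ zero matrix. *)

theory Defs
  imports "HOL-Analysis.Analysis" "HOL-Library.Countable_Set"
begin

definition Ck_on :: "nat \<Rightarrow> real set \<Rightarrow> (real \<Rightarrow> 'a::real_normed_vector) \<Rightarrow> bool" where
  "Ck_on m S f \<longleftrightarrow> (\<exists>D :: nat \<Rightarrow> real \<Rightarrow> 'a. D 0 = f \<and>
      (\<forall>k<m. \<forall>t\<in>S. (D k has_vector_derivative D (Suc k) t) (at t within S)) \<and>
      (\<forall>k\<le>m. continuous_on S (D k)))"

text \<open>Solutions (x,u) of  x'' = A0 x + A1 x' + B u  on [0,t1] with the regularity of the paper: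
  x of class C^(2n-1) (at least C^2, so that x'' exists), u of class C^(2n-3)
  (natural-number subtraction, i.e. merely continuous when n = 1).\<close>
definition is_solution ::
  "real^'n^'n \<Rightarrow> real^'n^'n \<Rightarrow> real^'r^'n \<Rightarrow> real \<Rightarrow> (real \<Rightarrow> real^'r) \<Rightarrow> (real \<Rightarrow> real^'n) \<Rightarrow> bool" where
  "is_solution A0 A1 B t1 u x \<longleftrightarrow>
     Ck_on (max 2 (2 * CARD('n) - 1)) {0..t1} x \<and>
     Ck_on (2 * CARD('n) - 3) {0..t1} u \<and>
     (\<forall>t\<in>{0..t1}.
        vector_derivative (\<lambda>s. vector_derivative x (at s within {0..t1})) (at t within {0..t1})
        = A0 *v x t + A1 *v vector_derivative x (at t within {0..t1}) + B *v u t)"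

definition observable_on ::
  "real^'n^'n \<Rightarrow> real^'n^'n \<Rightarrow> real^'r^'n \<Rightarrow> real^'n^'p \<Rightarrow> real \<Rightarrow> bool" where
  "observable_on A0 A1 B C t1 \<longleftrightarrow>
     (\<forall>u x z. is_solution A0 A1 B t1 u x \<and> is_solution A0 A1 B t1 u z \<and>
        (\<forall>t\<in>{0..t1}. C *v x t = C *v z t) \<longrightarrow>
        x 0 = z 0 \<and> vector_derivative x (at 0 within {0..t1}) = vector_derivative z (at 0 within {0..t1}))"

primrec SP :: "real^'n^'n \<Rightarrow> real^'n^'n \<Rightarrow> nat \<Rightarrow> (real^'n^'n) \<times> (real^'n^'n)" where
  "SP A0 A1 0 = (A0, A1)"
| "SP A0 A1 (Suc k) = (snd (SP A0 A1 k) ** A0, fst (SP A0 A1 k) + snd (SP A0 A1 k) ** A1)"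

definition S_mat :: "real^'n^'n \<Rightarrow> real^'n^'n \<Rightarrow> nat \<Rightarrow> real^'n^'n" where
  "S_mat A0 A1 k = fst (SP A0 A1 k)"

definition P_mat :: "real^'n^'n \<Rightarrow> real^'n^'n \<Rightarrow> nat \<Rightarrow> real^'n^'n" where
  "P_mat A0 A1 k = snd (SP A0 A1 k)"

definition hcat :: "real^'n^'p \<Rightarrow> real^'n^'p \<Rightarrow> real^('n + 'n)^'p" where
  "hcat M N = (\<chi> i. \<chi> c. case c of Inl j \<Rightarrow> M $ i $ j | Inr j \<Rightarrow> N $ i $ j)"

definition obs_block :: "real^'n^'n \<Rightarrow> real^'n^'n \<Rightarrow> real^'n^'p \<Rightarrow> nat \<Rightarrow> real^('n + 'n)^'p" where
  "obs_block A0 A1 C j =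
     (if j = 0 then hcat C 0
      else if j = 1 then hcat 0 C
      else hcat (C ** S_mat A0 A1 (j - 2)) (C ** P_mat A0 A1 (j - 2)))"

text \<open>Rows are indexed by pairs (b, i) where
  b ranges over a 2n-element type, enumerated as block number to_nat_on UNIV b in {0..<2n},
  and i is the row inside the block.\<close>
definition obs_matrix :: "real^'n^'n \<Rightarrow> real^'n^'n \<Rightarrow> real^'n^'p \<Rightarrow> real^('n + 'n)^(('n + 'n) \<times> 'p)" where
  "obs_matrix A0 A1 C = (\<chi> r. obs_block A0 A1 C (to_nat_on (UNIV :: ('n + 'n) set) (fst r)) $ snd r)"

end

theory Submission
  imports Defs
begin


definition Eop :: "('a::euclidean_space \<Rightarrow> 'a) \<Rightarrow> real \<Rightarrow> 'a \<Rightarrow> 'a" where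
  "Eop Lf t v = (\<Sum>n. (t^n / fact n) *\<^sub>R (Lf^^n) v)"

lemma linear_funpow: fixes Lf :: "'a::real_vector \<Rightarrow> 'a" shows "linear Lf \<Longrightarrow> linear (Lf^^n)"
  proof (induction n)
  case (Suc n) then show ?case using linear_compose[of "Lf^^n" Lf] by (simp add: o_def)
qed (simp add: linear_id)

lemma pow_bound:
  fixes Lf :: "'a::euclidean_space \<Rightarrow> 'a"
  assumes "linear Lf"
  obtains K where "K \<ge> 0" "\<And>n y. norm ((Lf^^n) y) \<le> K^n * norm y"
proof -
  obtain B where B: "B > 0" "\<And>x. norm (Lf x) \<le> B * norm x"
    using linear_bounded_pos[OF assms] by blast
  have "norm ((Lf^^n) y) \<le> B^n * norm y" for n y
  proof (induction n)
    case (Suc n)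
    have "norm ((Lf^^Suc n) y) \<le> B * norm ((Lf^^n) y)" using B(2) by simp
    also have "\<dots> \<le> B * (B^n * norm y)" using Suc B(1) by (simp add: mult_left_mono)
    finally show ?case by (simp add: mult.assoc)
  qed simp
  then show ?thesis using that B(1) by (meson less_imp_le)
qed

lemma summable_coef:
  fixes Lf :: "'a::euclidean_space \<Rightarrow> 'a"
  assumes "linear Lf"
  shows "summable (\<lambda>n. norm y * ((K * \<bar>t\<bar>)^n / fact n))"
  using summable_exp_generic[of "K * \<bar>t\<bar>"] 
  by (intro summable_mult) (simp add: divide_inverse mult.commute)

lemma Eop_summable:
  fixes Lf :: "'a::euclidean_space \<Rightarrow> 'a"
  assumes "linear Lf"
  shows "summable (\<lambda>n. (t^n / fact n) *\<^sub>R (Lf^^n) y)"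
proof -
  obtain K where K: "K \<ge> 0" "\<And>n y. norm ((Lf^^n) y) \<le> K^n * norm y"
    using pow_bound[OF assms] by blast
  show ?thesis
  proof (rule summable_norm_cancel, rule summable_comparison_test)
    show "summable (\<lambda>n. norm y * ((K * \<bar>t\<bar>)^n / fact n))"
      using summable_coef[OF assms] .
    show "\<exists>N. \<forall>n\<ge>N. norm (norm ((t ^ n / fact n) *\<^sub>R (Lf ^^ n) y)) \<le> norm y * ((K * \<bar>t\<bar>) ^ n / fact n)"
    proof (intro exI allI impI)
      fix n
      have "norm (norm ((t ^ n / fact n) *\<^sub>R (Lf ^^ n) y)) = (\<bar>t\<bar>^n / fact n) * norm ((Lf ^^ n) y)"
        by (simp add: power_abs)
      also have "\<dots> \<le> (\<bar>t\<bar>^n / fact n) * (K^n * norm y)"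
        by (intro mult_left_mono K(2)) auto
      also have "\<dots> = norm y * ((K * \<bar>t\<bar>) ^ n / fact n)"
        by (simp add: power_mult_distrib)
      finally show "norm (norm ((t ^ n / fact n) *\<^sub>R (Lf ^^ n) y)) \<le> norm y * ((K * \<bar>t\<bar>) ^ n / fact n)" .
    qed
  qed
qed

lemma Eop_linear_apply:
  fixes Lf :: "'a::euclidean_space \<Rightarrow> 'a" and h :: "'a \<Rightarrow> 'b::real_normed_vector"
  assumes "linear Lf" "bounded_linear h"
  shows "h (Eop Lf t y) = (\<Sum>n. (t^n / fact n) *\<^sub>R h ((Lf^^n) y))"
  unfolding Eop_def
  using bounded_linear.suminf[OF assms(2) Eop_summable[OF assms(1)]]
  by (simp add: linear_cmul[OF bounded_linear.linear[OF assms(2)]])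

lemma Eop_zero_fun:
  fixes Lf :: "'a::euclidean_space \<Rightarrow> 'a" and h :: "'a \<Rightarrow> 'b::real_normed_vector"
  assumes "linear Lf" "bounded_linear h" "\<And>n. h ((Lf^^n) y) = 0"
  shows "h (Eop Lf t y) = 0"
  using Eop_linear_apply[OF assms(1,2)] assms(3) by simp

lemma Eop_0: "Eop Lf 0 y = y"
proof -
  have "(\<lambda>n. ((0::real)^n / fact n) *\<^sub>R (Lf^^n) y) = (\<lambda>n. if n = 0 then (Lf^^n) y else 0)"
    by auto
  then show ?thesis unfolding Eop_def using sums_single[of 0 "\<lambda>n. (Lf^^n) y"]
    by (simp add: sums_iff)
qed

lemma Eop_commute:
  fixes Lf :: "'a::euclidean_space \<Rightarrow> 'a"
  assumes "linear Lf"
  shows "Lf (Eop Lf t y) = Eop Lf t (Lf y)"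
proof -
  have bl: "bounded_linear Lf" using assms linear_conv_bounded_linear by blast
  have "Lf (Eop Lf t y) = (\<Sum>n. (t^n / fact n) *\<^sub>R Lf ((Lf^^n) y))"
    by (rule Eop_linear_apply[OF assms bl])
  also have "\<dots> = Eop Lf t (Lf y)" unfolding Eop_def
    by (simp add: funpow_swap1)
  finally show ?thesis .
qed

lemma Eop_deriv:
  fixes Lf :: "'a::euclidean_space \<Rightarrow> 'a"
  assumes "linear Lf"
  shows "((\<lambda>t. Eop Lf t y) has_vector_derivative Eop Lf t (Lf y)) (at t)"
proof -
  obtain K where K: "K \<ge> 0" "\<And>n y. norm ((Lf^^n) y) \<le> K^n * norm y"
    using pow_bound[OF assms] by blast
  define c where "c i n = (((Lf^^n) y) \<bullet> i) / fact n" for i n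
  have comp: "Eop Lf s y \<bullet> i = (\<Sum>n. c i n * s^n)" for s i
    using Eop_linear_apply[OF assms bounded_linear_inner_left[of i], of s y]
    by (simp add: c_def field_simps)
  have compL: "Eop Lf s (Lf y) \<bullet> i = (\<Sum>n. diffs (c i) n * s^n)" for s i
  proof -
    have "Eop Lf s (Lf y) \<bullet> i = (\<Sum>n. (s^n / fact n) * ((Lf^^n) (Lf y) \<bullet> i))"
      using Eop_linear_apply[OF assms bounded_linear_inner_left[of i], of s "Lf y"] by simp
    also have "\<dots> = (\<Sum>n. diffs (c i) n * s^n)"
    proof (intro suminf_cong)
      fix n
      have "diffs (c i) n = (Lf^^n) (Lf y) \<bullet> i / fact n"
        by (simp add: diffs_def c_def funpow_Suc_right del: funpow.simps)
      then show "s ^ n / fact n * ((Lf ^^ n) (Lf y) \<bullet> i) = diffs (c i) n * s ^ n"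
        by simp
    qed
    finally show ?thesis .
  qed
  have summ: "summable (\<lambda>n. c i n * s^n)" if "i \<in> Basis" for i s
  proof (rule summable_norm_cancel, rule summable_comparison_test)
    show "summable (\<lambda>n. norm y * ((K * \<bar>s\<bar>)^n / fact n))"
      using summable_coef[OF assms] .
    show "\<exists>N. \<forall>n\<ge>N. norm (norm (c i n * s^n)) \<le> norm y * ((K * \<bar>s\<bar>) ^ n / fact n)"
    proof (intro exI allI impI)
      fix n
      have "norm (norm (c i n * s^n)) = (\<bar>s\<bar>^n / fact n) * \<bar>(Lf ^^ n) y \<bullet> i\<bar>"
        by (simp add: c_def power_abs abs_mult)
      also have "\<dots> \<le> (\<bar>s\<bar>^n / fact n) * (K^n * norm y)"
        by (intro mult_left_mono order.trans[OF Basis_le_norm[OF that] K(2)]) auto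
      also have "\<dots> = norm y * ((K * \<bar>s\<bar>) ^ n / fact n)"
        by (simp add: power_mult_distrib)
      finally show "norm (norm (c i n * s^n)) \<le> norm y * ((K * \<bar>s\<bar>) ^ n / fact n)" .
    qed
  qed
  have d: "((\<lambda>s. Eop Lf s y \<bullet> i) has_field_derivative (Eop Lf t (Lf y) \<bullet> i)) (at t)"
    if "i \<in> Basis" for i
    unfolding comp compL
    by (rule termdiffs_strong_converges_everywhere) (use summ[OF that] in auto)
  have eq: "(\<lambda>s. Eop Lf s y) = (\<lambda>s. \<Sum>i\<in>Basis. (Eop Lf s y \<bullet> i) *\<^sub>R i)"
    by (simp add: euclidean_representation)
  have "((\<lambda>s. \<Sum>i\<in>Basis. (Eop Lf s y \<bullet> i) *\<^sub>R i) has_vector_derivative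
        (\<Sum>i\<in>Basis. (Eop Lf t (Lf y) \<bullet> i) *\<^sub>R i)) (at t)"
    by (rule has_vector_derivative_sum)
       (use has_vector_derivative_scaleR[OF d has_vector_derivative_const] in auto)
  moreover have e2: "(\<Sum>i\<in>Basis. (Eop Lf t (Lf y) \<bullet> i) *\<^sub>R i) = Eop Lf t (Lf y)"
    by (rule euclidean_representation)
  ultimately show ?thesis unfolding e2 eq[symmetric] by blast
qed



lemma stabilize:
  fixes L :: "'a::euclidean_space \<Rightarrow> 'a" and h :: "'a \<Rightarrow> 'b::real_vector"
  assumes lL: "linear L" and lh: "linear h" and v: "\<forall>j<DIM('a). h ((L^^j) v) = 0"
  shows "h ((L^^j) v) = 0"
proof -
  define K where "K m = {y. \<forall>k<m. h ((L^^k) y) = 0}" for m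
  have lin: "linear (\<lambda>y. h ((L^^k) y))" for k
    using linear_compose[OF linear_funpow[OF lL] lh] by (simp add: o_def)
  have sub: "subspace (K m)" for m
    unfolding subspace_def K_def
    using linear_add[OF lin] linear_cmul[OF lin] linear_0[OF lin] by auto
  have anti: "m \<le> m' \<Longrightarrow> K m' \<subseteq> K m" for m m'
    by (auto simp: K_def)
  have step: "K (Suc i) = K (Suc (Suc i))" if eq: "K i = K (Suc i)" for i
  proof
    show "K (Suc (Suc i)) \<subseteq> K (Suc i)" by (rule anti) simp
    show "K (Suc i) \<subseteq> K (Suc (Suc i))"
    proof
      fix y assume y: "y \<in> K (Suc i)"
      have "L y \<in> K i"
        unfolding K_def
      proof (safe)
        fix k assume "k < i"
        then have "h ((L^^Suc k) y) = 0" using y by (auto simp: K_def)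
        then show "h ((L^^k) (L y)) = 0" by (simp add: funpow_Suc_right del: funpow.simps)
      qed
      then have "L y \<in> K (Suc i)" using eq by simp
      then have "h ((L^^i) (L y)) = 0" by (auto simp: K_def)
      then have "h ((L^^Suc i) y) = 0" by (simp add: funpow_Suc_right del: funpow.simps)
      then show "y \<in> K (Suc (Suc i))" using y by (auto simp: K_def less_Suc_eq)
    qed
  qed
  have stab2: "K (i + d) = K i \<and> K (i + d) = K (Suc (i + d))" if "K i = K (Suc i)" for i d
  proof (induction d)
    case 0 then show ?case using that by simp
  next
    case (Suc d)
    then have "K (Suc (i + d)) = K (Suc (Suc (i + d)))" using step by blast
    then show ?case using Suc by (metis add_Suc_right)
  qed
  have dimc: "(\<exists>i<m. K i = K (Suc i)) \<or> dim (K m) + m \<le> DIM('a)" for m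
  proof (induction m)
    case 0 then show ?case using dim_subset_UNIV[of "K 0"] by simp
  next
    case (Suc m)
    show ?case
    proof (cases "(\<exists>i<m. K i = K (Suc i)) \<or> K m = K (Suc m)")
      case True then show ?thesis using less_Suc_eq by blast
    next
      case False
      then have d: "dim (K m) + m \<le> DIM('a)" using Suc by blast
      have "K (Suc m) \<subset> K m" using anti[of m "Suc m"] False by auto
      then have "dim (K (Suc m)) < dim (K m)"
      proof -
        have sp: "span (K (Suc m)) = K (Suc m)" "span (K m) = K m"
          using sub span_eq_iff by blast+
        show ?thesis using eucl.dim_psubset[of "K (Suc m)" "K m"] \<open>K (Suc m) \<subset> K m\<close>
          unfolding sp by blast
      qed
      then show ?thesis using d by simp
    qed
  qed
  obtain i where i: "i < Suc DIM('a)" "K i = K (Suc i)"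
    using dimc[of "Suc DIM('a)"] by auto
  have "K DIM('a) = K i" using stab2[OF i(2), of "DIM('a) - i"] i(1) by simp
  moreover have "K (Suc j + DIM('a)) = K i" using stab2[OF i(2), of "Suc j + DIM('a) - i"] i(1) by simp
  moreover have "v \<in> K DIM('a)" using v by (simp add: K_def)
  ultimately have "v \<in> K (Suc j + DIM('a))" by simp
  then show ?thesis by (simp add: K_def)
qed



definition Lsys :: "real^'n^'n \<Rightarrow> real^'n^'n \<Rightarrow> ((real^'n) \<times> (real^'n)) \<Rightarrow> ((real^'n) \<times> (real^'n))" where
  "Lsys A0 A1 v = (snd v, A0 *v fst v + A1 *v snd v)"

lemma linear_Lsys: "linear (Lsys A0 A1)"
  by (rule linearI) (auto simp: Lsys_def matrix_vector_right_distrib matrix_vector_mult_scaleR algebra_simps)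

lemma Lsys_pow_fst:
  "fst ((Lsys A0 A1 ^^ (Suc (Suc k))) v) = S_mat A0 A1 k *v fst v + P_mat A0 A1 k *v snd v"
proof (induction k arbitrary: v)
  case 0
  show ?case by (simp add: Lsys_def S_mat_def P_mat_def)
next
  case (Suc k)
  have "fst ((Lsys A0 A1 ^^ Suc (Suc (Suc k))) v) = fst ((Lsys A0 A1 ^^ Suc (Suc k)) (Lsys A0 A1 v))"
    by (simp only: funpow_Suc_right o_apply)
  also have "\<dots> = S_mat A0 A1 k *v snd v + P_mat A0 A1 k *v (A0 *v fst v + A1 *v snd v)"
    by (simp only: Suc.IH) (simp add: Lsys_def)
  also have "\<dots> = S_mat A0 A1 (Suc k) *v fst v + P_mat A0 A1 (Suc k) *v snd v"
    by (simp add: S_mat_def P_mat_def matrix_vector_mult_add_rdistrib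
        matrix_vector_mul_assoc[symmetric] matrix_vector_right_distrib algebra_simps)
  finally show ?case .
qed

lemma is_solution_exp:
  fixes A0 A1 :: "real^'n^'n" and B :: "real^'r^'n"
  assumes t1: "t1 > 0"
  defines "L \<equiv> Lsys A0 A1"
  shows "is_solution A0 A1 B t1 (\<lambda>_. 0) (\<lambda>t. fst (Eop L t v))"
    and "vector_derivative (\<lambda>t. fst (Eop L t v)) (at 0 within {0..t1}) = snd v"
proof -
  have lL: "linear L" unfolding L_def by (rule linear_Lsys)
  define D where "D k t = fst (Eop L t ((L^^k) v))" for k t
  have DD: "(D k has_vector_derivative D (Suc k) t) (at t within S)" for k t S
    unfolding D_def
    using bounded_linear.has_vector_derivative[OF bounded_linear_fst Eop_deriv[OF lL, of "(L^^k) v" t]]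
    by (auto intro: has_vector_derivative_at_within)
  have Dc: "continuous_on S (D k)" for k S
    by (rule continuous_at_imp_continuous_on)
       (use has_vector_derivative_continuous[OF DD[of k _ UNIV]] in auto)
  have D0: "D 0 = (\<lambda>t. fst (Eop L t v))" by (simp add: D_def fun_eq_iff)
  have Ck: "Ck_on m S (\<lambda>t. fst (Eop L t v))" for m S
    unfolding Ck_on_def using DD Dc D0 by blast
  have Cu: "Ck_on m S (\<lambda>_. 0::real^'r)" for m S
    unfolding Ck_on_def
    by (rule exI[of _ "\<lambda>_ _. 0"]) (auto intro: has_vector_derivative_const)
  have vd1: "vector_derivative (\<lambda>t. fst (Eop L t v)) (at t within {0..t1}) = D 1 t"
    if "t \<in> {0..t1}" for t
    using vector_derivative_within_closed_interval[OF t1 that DD[of 0 t "{0..t1}", unfolded D0]]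
    by simp
  have D1: "D 1 t = snd (Eop L t v)" for t
  proof -
    have "D 1 t = fst (L (Eop L t v))"
      unfolding D_def using Eop_commute[OF lL, of t v] by simp
    then show ?thesis by (simp add: L_def Lsys_def)
  qed
  have D2: "D 2 t = A0 *v fst (Eop L t v) + A1 *v snd (Eop L t v)" for t
  proof -
    have "(L^^2) v = L (L v)" by (simp add: numeral_2_eq_2)
    then have "D 2 t = fst (L (L (Eop L t v)))"
      unfolding D_def using Eop_commute[OF lL] by simp
    then show ?thesis by (simp add: L_def Lsys_def)
  qed
  have vd2: "vector_derivative (\<lambda>s. vector_derivative (\<lambda>t. fst (Eop L t v)) (at s within {0..t1}))
      (at t within {0..t1}) = D 2 t" if "t \<in> {0..t1}" for t
  proof (rule vector_derivative_within_closed_interval[OF t1 that])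
    show "((\<lambda>s. vector_derivative (\<lambda>t. fst (Eop L t v)) (at s within {0..t1})) has_vector_derivative D 2 t)
      (at t within {0..t1})"
      using DD[of 1 t "{0..t1}"] unfolding numeral_2_eq_2 One_nat_def
      by (rule has_vector_derivative_transform_within[where d=1]) (use that vd1 in \<open>auto simp: numeral_2_eq_2\<close>)
  qed
  show "is_solution A0 A1 B t1 (\<lambda>_. 0) (\<lambda>t. fst (Eop L t v))"
    unfolding is_solution_def using Ck Cu vd1 vd2 D1 D2 by simp
  show "vector_derivative (\<lambda>t. fst (Eop L t v)) (at 0 within {0..t1}) = snd v"
    using vd1[of 0] D1[of 0] t1 by (simp add: Eop_0)
qed



lemma bl_mv: "bounded_linear (\<lambda>y. (A::real^'n^'m) *v y)"
  using linear_conv_bounded_linear matrix_vector_mul_linear by blast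

lemma obs_if:
  fixes A0 A1 :: "real^'n^'n" and B :: "real^'r^'n" and C :: "real^'n^'p"
  assumes t1: "t1 > 0"
    and full: "\<forall>v. (\<forall>j<2*CARD('n). C *v fst ((Lsys A0 A1 ^^ j) v) = 0) \<longrightarrow> v = 0"
  shows "observable_on A0 A1 B C t1"
  unfolding observable_on_def
proof (intro allI impI, elim conjE)
  fix u x z
  assume sx: "is_solution A0 A1 B t1 u x" and sz: "is_solution A0 A1 B t1 u z"
    and out0: "\<forall>t\<in>{0..t1}. C *v x t = C *v z t"
  define m where "m = max 2 (2 * CARD('n) - 1)"
  define I where "I = {0..t1}"
  have I0: "0 \<in> I" using t1 by (simp add: I_def)
  have m2: "2 \<le> m" by (simp add: m_def)
  have cx: "Ck_on m I x" and odex0: "\<And>t. t \<in> I \<Longrightarrow> vector_derivative (\<lambda>s. vector_derivative x (at s within I)) (at t within I)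
        = A0 *v x t + A1 *v vector_derivative x (at t within I) + B *v u t"
    using sx by (simp_all add: is_solution_def m_def I_def)
  obtain Dx where Dx0: "Dx 0 = x" and Dxd: "\<And>k t. k < m \<Longrightarrow> t \<in> I \<Longrightarrow> (Dx k has_vector_derivative Dx (Suc k) t) (at t within I)"
    using cx unfolding Ck_on_def by blast
  have cz: "Ck_on m I z" and odez0: "\<And>t. t \<in> I \<Longrightarrow> vector_derivative (\<lambda>s. vector_derivative z (at s within I)) (at t within I)
        = A0 *v z t + A1 *v vector_derivative z (at t within I) + B *v u t"
    using sz by (simp_all add: is_solution_def m_def I_def)
  obtain Dz where Dz0: "Dz 0 = z" and Dzd: "\<And>k t. k < m \<Longrightarrow> t \<in> I \<Longrightarrow> (Dz k has_vector_derivative Dz (Suc k) t) (at t within I)"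
    using cz unfolding Ck_on_def by blast
  have vdx: "vector_derivative x (at t within I) = Dx 1 t" if "t \<in> I" for t
    using vector_derivative_within_closed_interval[OF t1 that[unfolded I_def] Dxd[of 0 t, unfolded Dx0 I_def]] that m2
    by (simp add: I_def)
  have vdz: "vector_derivative z (at t within I) = Dz 1 t" if "t \<in> I" for t
    using vector_derivative_within_closed_interval[OF t1 that[unfolded I_def] Dzd[of 0 t, unfolded Dz0 I_def]] that m2
    by (simp add: I_def)
  have odex: "Dx 2 t = A0 *v x t + A1 *v Dx 1 t + B *v u t" if "t \<in> I" for t
  proof -
    have "((\<lambda>s. vector_derivative x (at s within I)) has_vector_derivative Dx 2 t) (at t within I)"
    proof (rule has_vector_derivative_transform_within[where d=1])
      show "(Dx 1 has_vector_derivative Dx 2 t) (at t within I)"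
        using Dxd[of 1 t] m2 that by (simp add: numeral_2_eq_2)
      show "Dx 1 x' = vector_derivative x (at x' within I)" if "x' \<in> I" for x'
        using vdx[OF that] by simp
    qed (use that in auto)
    then have "vector_derivative (\<lambda>s. vector_derivative x (at s within I)) (at t within I) = Dx 2 t"
      using vector_derivative_within_closed_interval[OF t1 that[unfolded I_def]] unfolding I_def by blast
    then show ?thesis using odex0[OF that] vdx[OF that] by simp
  qed
  have odez: "Dz 2 t = A0 *v z t + A1 *v Dz 1 t + B *v u t" if "t \<in> I" for t
  proof -
    have "((\<lambda>s. vector_derivative z (at s within I)) has_vector_derivative Dz 2 t) (at t within I)"
    proof (rule has_vector_derivative_transform_within[where d=1])
      show "(Dz 1 has_vector_derivative Dz 2 t) (at t within I)"
        using Dzd[of 1 t] m2 that by (simp add: numeral_2_eq_2)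
      show "Dz 1 x' = vector_derivative z (at x' within I)" if "x' \<in> I" for x'
        using vdz[OF that] by simp
    qed (use that in auto)
    then have "vector_derivative (\<lambda>s. vector_derivative z (at s within I)) (at t within I) = Dz 2 t"
      using vector_derivative_within_closed_interval[OF t1 that[unfolded I_def]] unfolding I_def by blast
    then show ?thesis using odez0[OF that] vdz[OF that] by simp
  qed
  define D where "D k t = Dx k t - Dz k t" for k t
  have Dd: "(D k has_vector_derivative D (Suc k) t) (at t within I)" if "k < m" "t \<in> I" for k t
    unfolding D_def[abs_def] using Dxd[OF that] Dzd[OF that] by (rule has_vector_derivative_diff)
  have uniq: "a = b" if "(f has_vector_derivative a) (at t within I)" "(f has_vector_derivative b) (at t within I)"
    "t \<in> I" for f :: "real \<Rightarrow> real^'q" and a b t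
    using vector_derivative_within_closed_interval[OF t1, of t f a] vector_derivative_within_closed_interval[OF t1, of t f b]
      that by (simp add: I_def)
  have ode: "D 2 t = A0 *v D 0 t + A1 *v D 1 t" if "t \<in> I" for t
    using odex[OF that] odez[OF that] Dx0 Dz0
    by (simp add: D_def matrix_vector_right_distrib matrix_vector_mult_diff_distrib algebra_simps)
  have recr: "D (Suc (Suc k)) t = A0 *v D k t + A1 *v D (Suc k) t" if "Suc (Suc k) \<le> m" "t \<in> I" for k t
    using that
  proof (induction k arbitrary: t)
    case 0 then show ?case using ode by (simp add: numeral_2_eq_2)
  next
    case (Suc k)
    have d1: "(D (Suc (Suc k)) has_vector_derivative D (Suc (Suc (Suc k))) t) (at t within I)"
      using Dd Suc.prems by simp
    have d2: "((\<lambda>s. A0 *v D k s + A1 *v D (Suc k) s) has_vector_derivative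
        A0 *v D (Suc k) t + A1 *v D (Suc (Suc k)) t) (at t within I)"
      using Suc.prems
      by (intro has_vector_derivative_add bounded_linear.has_vector_derivative[OF bl_mv] Dd) auto
    have d3: "(D (Suc (Suc k)) has_vector_derivative A0 *v D (Suc k) t + A1 *v D (Suc (Suc k)) t) (at t within I)"
      using d2 by (rule has_vector_derivative_transform_within[where d=1])
        (use Suc.prems Suc.IH in auto)
    show ?case using uniq[OF d1 d3 Suc.prems(2)] .
  qed
  have outk: "C *v D k t = 0" if "k \<le> m" "t \<in> I" for k t
    using that
  proof (induction k arbitrary: t)
    case 0 then show ?case using out0 Dx0 Dz0 by (simp add: D_def I_def matrix_vector_mult_diff_distrib)
  next
    case (Suc k)
    have d1: "((\<lambda>s. C *v D k s) has_vector_derivative C *v D (Suc k) t) (at t within I)"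
      using Suc.prems by (intro bounded_linear.has_vector_derivative[OF bl_mv] Dd) auto
    have d2: "((\<lambda>s. C *v D k s) has_vector_derivative 0) (at t within I)"
      by (rule has_vector_derivative_transform_within[OF has_vector_derivative_const[of 0] zero_less_one])
        (use Suc in auto)
    show ?case using uniq[OF d1 d2 Suc.prems(2)] .
  qed
  define v0 where "v0 = (D 0 0, D 1 0)"
  have pw: "(Lsys A0 A1 ^^ k) v0 = (D k 0, D (Suc k) 0)" if "k < m" for k
    using that
  proof (induction k)
    case 0 then show ?case by (simp add: v0_def)
  next
    case (Suc k)
    then have "(Lsys A0 A1 ^^ Suc k) v0 = Lsys A0 A1 (D k 0, D (Suc k) 0)" by simp
    also have "\<dots> = (D (Suc k) 0, D (Suc (Suc k)) 0)"
      using recr[of k 0] Suc.prems I0 by (simp add: Lsys_def)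
    finally show ?case .
  qed
  have gk: "C *v fst ((Lsys A0 A1 ^^ k) v0) = 0" if "k \<le> m" for k
  proof (cases "k < m")
    case True then show ?thesis using pw outk I0 by simp
  next
    case False
    then have k: "k = Suc (m - 1)" "m - 1 < m" using that m2 by auto
    have "(Lsys A0 A1 ^^ k) v0 = Lsys A0 A1 ((Lsys A0 A1 ^^ (m - 1)) v0)"
      by (subst k(1)) simp
    also have "\<dots> = Lsys A0 A1 (D (m - 1) 0, D k 0)"
      by (simp only: pw[OF k(2)] k(1)[symmetric])
    finally have "(Lsys A0 A1 ^^ k) v0 = Lsys A0 A1 (D (m - 1) 0, D k 0)" .
    then show ?thesis using outk[of k 0] that I0 by (simp add: Lsys_def)
  qed
  have "\<forall>j<2*CARD('n). C *v fst ((Lsys A0 A1 ^^ j) v0) = 0"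
    using gk by (simp add: m_def)
  then have "v0 = 0" using full by blast
  then have "D 0 0 = 0" "D 1 0 = 0" by (auto simp: v0_def zero_prod_def)
  then show "x 0 = z 0 \<and> vector_derivative x (at 0 within {0..t1}) = vector_derivative z (at 0 within {0..t1})"
    using vdx[OF I0] vdz[OF I0] Dx0 Dz0 by (auto simp: D_def I_def)
qed



definition spl :: "real^('n + 'n) \<Rightarrow> (real^'n) \<times> (real^'n)" where
  "spl x = (\<chi> j. x $ Inl j, \<chi> j. x $ Inr j)"
definition jn :: "(real^'n) \<times> (real^'n) \<Rightarrow> real^('n + 'n)" where
  "jn v = (\<chi> c. case c of Inl j \<Rightarrow> fst v $ j | Inr j \<Rightarrow> snd v $ j)"

lemma spl_jn: "spl (jn v) = v"
  by (simp add: spl_def jn_def vec_eq_iff prod_eq_iff)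
lemma jn_spl: "jn (spl x) = x"
  by (simp add: spl_def jn_def vec_eq_iff split: sum.split)
lemma spl_0: "spl 0 = 0"
  by (simp add: spl_def vec_eq_iff zero_prod_def)

lemma sum_UNIV_Plus:
  "sum f (UNIV::('a::finite + 'b::finite) set) = sum (f o Inl) UNIV + sum (f o Inr) UNIV"
  by (metis UNIV_Plus_UNIV finite sum.Plus)

lemma hcat_mult: "hcat M N *v x = M *v fst (spl x) + N *v snd (spl x)"
  by (simp add: vec_eq_iff matrix_vector_mult_def hcat_def spl_def sum_UNIV_Plus o_def)

lemma block_mult:
  "obs_block A0 A1 C j *v x = C *v fst ((Lsys A0 A1 ^^ j) (spl x))"
proof -
  consider "j = 0" | "j = 1" | k where "j = Suc (Suc k)"
    by (metis One_nat_def not0_implies_Suc)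
  then show ?thesis
  proof cases
    case 1 then show ?thesis by (simp add: obs_block_def hcat_mult)
  next
    case 2 then show ?thesis by (simp add: obs_block_def hcat_mult Lsys_def)
  next
    case 3 then show ?thesis
      by (simp add: obs_block_def hcat_mult Lsys_pow_fst matrix_vector_mul_assoc[symmetric]
          matrix_vector_right_distrib del: funpow.simps)
  qed
qed

lemma obs_mult_zero:
  fixes C :: "real^'n^'p"
  shows "obs_matrix A0 A1 C *v x = 0 \<longleftrightarrow> (\<forall>j<2*CARD('n). obs_block A0 A1 C j *v x = 0)"
proof -
  let ?tn = "to_nat_on (UNIV :: ('n + 'n) set)"
  have comp: "(obs_matrix A0 A1 C *v x) $ (b, i) = (obs_block A0 A1 C (?tn b) *v x) $ i" for b i
    by (simp add: matrix_vector_mult_def obs_matrix_def)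
  have img: "?tn ` UNIV = {..<2*CARD('n)}"
    using bij_betw_imp_surj_on[OF to_nat_on_finite[of "UNIV :: ('n + 'n) set", simplified]]
    by (simp add: card_sum)
  have "obs_matrix A0 A1 C *v x = 0 \<longleftrightarrow> (\<forall>b. obs_block A0 A1 C (?tn b) *v x = 0)"
    by (auto simp: vec_eq_iff comp)
  also have "\<dots> \<longleftrightarrow> (\<forall>j\<in>?tn ` UNIV. obs_block A0 A1 C j *v x = 0)" by blast
  finally show ?thesis unfolding img by blast
qed

lemma obs_kernel:
  fixes A0 A1 :: "real^'n^'n" and C :: "real^'n^'p"
  shows "rank (obs_matrix A0 A1 C) = 2 * CARD('n) \<longleftrightarrow>
    (\<forall>v. (\<forall>j<2*CARD('n). C *v fst ((Lsys A0 A1 ^^ j) v) = 0) \<longrightarrow> v = 0)"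
proof -
  let ?P = "\<lambda>v. \<forall>j<2*CARD('n). C *v fst ((Lsys A0 A1 ^^ j) v) = 0"
  have k: "obs_matrix A0 A1 C *v x = 0 \<longleftrightarrow> ?P (spl x)" for x
    by (simp add: obs_mult_zero block_mult)
  have "rank (obs_matrix A0 A1 C) = 2 * CARD('n) \<longleftrightarrow> inj ((*v) (obs_matrix A0 A1 C))"
    using full_rank_injective[of "obs_matrix A0 A1 C"] by (simp add: card_sum mult_2)
  also have "\<dots> \<longleftrightarrow> (\<forall>x. obs_matrix A0 A1 C *v x = 0 \<longrightarrow> x = 0)"
    using linear_injective_0[OF matrix_vector_mul_linear[of "obs_matrix A0 A1 C"]] by simp
  also have "\<dots> \<longleftrightarrow> (\<forall>v. ?P v \<longrightarrow> v = 0)"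
  proof
    assume H: "\<forall>x. obs_matrix A0 A1 C *v x = 0 \<longrightarrow> x = 0"
    show "\<forall>v. ?P v \<longrightarrow> v = 0"
    proof (intro allI impI)
      fix v assume "?P v"
      then have "jn v = 0" using H k[of "jn v"] by (simp add: spl_jn)
      then show "v = 0" using spl_jn[of v] spl_0 by metis
    qed
  next
    assume H: "\<forall>v. ?P v \<longrightarrow> v = 0"
    show "\<forall>x. obs_matrix A0 A1 C *v x = 0 \<longrightarrow> x = 0"
    proof (intro allI impI)
      fix x assume "obs_matrix A0 A1 C *v x = 0"
      then have "spl x = 0" using H k by blast
      then have "jn (spl x) = jn 0" by simp
      moreover have "jn (0 :: (real^'n) \<times> (real^'n)) = 0" by (simp add: jn_def vec_eq_iff split: sum.split)
      ultimately show "x = 0" by (simp add: jn_spl)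
    qed
  qed
  finally show ?thesis .
qed

theorem theorem3p1:
  fixes A0 A1 :: "real^'n^'n" and B :: "real^'r^'n" and C :: "real^'n^'p" and t1 :: real
  assumes "t1 > 0"
  shows "observable_on A0 A1 B C t1 \<longleftrightarrow> rank (obs_matrix A0 A1 C) = 2 * CARD('n)"
proof
  assume "rank (obs_matrix A0 A1 C) = 2 * CARD('n)"
  then show "observable_on A0 A1 B C t1"
    using obs_if[OF assms] obs_kernel by blast
next
  assume obs: "observable_on A0 A1 B C t1"
  let ?L = "Lsys A0 A1"
  show "rank (obs_matrix A0 A1 C) = 2 * CARD('n)"
    unfolding obs_kernel
  proof (intro allI impI)
    fix v :: "(real^'n) \<times> (real^'n)"
    assume P: "\<forall>j<2*CARD('n). C *v fst ((?L ^^ j) v) = 0"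
    have lh: "linear (\<lambda>y::(real^'n) \<times> (real^'n). C *v fst y)"
      using linear_compose[OF linear_fst matrix_vector_mul_linear[of C]] by (simp add: o_def)
    have blh: "bounded_linear (\<lambda>y::(real^'n) \<times> (real^'n). C *v fst y)"
      using lh linear_conv_bounded_linear by blast
    have allk: "C *v fst ((?L ^^ j) v) = 0" for j
      using stabilize[OF linear_Lsys lh, where v=v and j=j] P by (simp add: card_sum)
    have out: "C *v fst (Eop ?L t v) = 0" for t
      using Eop_zero_fun[OF linear_Lsys[of A0 A1], where h="\<lambda>y. C *v fst y" and y=v and t=t] allk lh
        linear_conv_bounded_linear by blast
    have out0: "C *v fst (Eop ?L t 0) = 0" for t
      using Eop_zero_fun[OF linear_Lsys[of A0 A1] blh, where y=0 and t=t]
        linear_0[OF linear_funpow[OF linear_Lsys[of A0 A1]]] by simp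
    have s1: "is_solution A0 A1 B t1 (\<lambda>_. 0) (\<lambda>t. fst (Eop ?L t v))"
      and d1: "vector_derivative (\<lambda>t. fst (Eop ?L t v)) (at 0 within {0..t1}) = snd v"
      using is_solution_exp[OF assms] by blast+
    have s2: "is_solution A0 A1 B t1 (\<lambda>_. 0) (\<lambda>t. fst (Eop ?L t 0))"
      and d2: "vector_derivative (\<lambda>t. fst (Eop ?L t 0)) (at 0 within {0..t1}) = snd (0::(real^'n) \<times> (real^'n))"
      using is_solution_exp[OF assms] by blast+
    have "fst (Eop ?L 0 v) = fst (Eop ?L 0 (0::(real^'n) \<times> (real^'n))) \<and> snd v = snd (0::(real^'n) \<times> (real^'n))"
      using obs[unfolded observable_on_def, rule_format, OF conjI[OF s1 conjI[OF s2]]] out out0 d1 d2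
      by simp
    then show "v = 0" by (simp add: Eop_0 prod_eq_iff)
  qed
qed

end
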